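(* Let $B=B_0+B_1$ be a unital associative superalgebra and let $Z=Z(B)_0$ be the even part of its center. Assume that the nonzero elements of $Z$ are not zero divisors of $B$, and let $A=Z^{-1}B$ be the central closure of $B$, a superalgebra over the field $k=Z^{-1}Z$. If the superalgebra $A$ is simple and finite dimensional over $k$, then $B$ embeds, as a $Z$-module, into a free finitely generated $Z$-module.
   Context: A superalgebra is a $\mathbb{Z}_2$-graded algebra $B=B_0\oplus B_1$, where $B_0$ is the even part and $B_1$ is the odd part. For elements $x,y,z$ write $(x,y,z)=(xy)z-x(yz)$ and $[x,y]=xy-yx$. The center of a (super)algebra $B$ is $Z(B)=\{x\in B\mid (x,a,b)=(a,x,b)=(a,b,x)=[a,x]=0 \text{ for all } a,b\in B\}$, and $Z(B)_0=Z(B)\cap B_0$ is its even part. $Z^{-1}B$ denotes the localization of $B$ at $Z\setminus\{0\}$, which contains $B$ under the stated assumption, and $Z^{-1}Z$ is the field of fractions of $Z$. A superalgebra is simple if it has no graded ideals other than $0$ and itself and its product is nonzero. *)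

theory Defs
  imports Main
begin

text \<open>A unital associative (super)algebra is modelled as a type of class ring_1
  (viewed as an algebra over its prime ring; ideals of a unital algebra are
  automatically subspaces).\<close>

definition add_subgroup :: "'b::ring_1 set \<Rightarrow> bool" where
  "add_subgroup S \<longleftrightarrow> 0 \<in> S \<and> (\<forall>x\<in>S. \<forall>y\<in>S. x + y \<in> S) \<and> (\<forall>x\<in>S. - x \<in> S)"

definition superalgebra :: "'b::ring_1 set \<Rightarrow> 'b set \<Rightarrow> bool" where
  "superalgebra B0 B1 \<longleftrightarrow>
     add_subgroup B0 \<and> add_subgroup B1 \<and>
     (\<forall>x. \<exists>x0\<in>B0. \<exists>x1\<in>B1. x = x0 + x1) \<and> B0 \<inter> B1 = {0} \<and>
     (\<forall>x\<in>B0. \<forall>y\<in>B0. x * y \<in> B0) \<and> (\<forall>x\<in>B0. \<forall>y\<in>B1. x * y \<in> B1) \<and>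
     (\<forall>x\<in>B1. \<forall>y\<in>B0. x * y \<in> B1) \<and> (\<forall>x\<in>B1. \<forall>y\<in>B1. x * y \<in> B0)"

text \<open>Center, literally as in the paper: (x,a,b)=(a,x,b)=(a,b,x)=[a,x]=0.\<close>
definition center :: "'b::ring_1 set" where
  "center = {x. \<forall>a b. (x * a) * b - x * (a * b) = 0 \<and> (a * x) * b - a * (x * b) = 0 \<and>
                        (a * b) * x - a * (b * x) = 0 \<and> a * x - x * a = 0}"

text \<open>phi : B -> A exhibits A as the localization Z^{-1}B (Z central, regular):
  phi is an injective unital ring homomorphism, every phi z (z in Z, z /= 0) is
  invertible in A, and every element of A has the form phi b * (phi z)^{-1}.\<close>
definition is_localization :: "'b::ring_1 set \<Rightarrow> ('b \<Rightarrow> 'a::ring_1) \<Rightarrow> bool" where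
  "is_localization Z \<phi> \<longleftrightarrow>
     inj \<phi> \<and> \<phi> 1 = 1 \<and> (\<forall>x y. \<phi> (x + y) = \<phi> x + \<phi> y \<and> \<phi> (x * y) = \<phi> x * \<phi> y) \<and>
     (\<forall>z\<in>Z - {0}. \<exists>w. w * \<phi> z = 1 \<and> \<phi> z * w = 1) \<and>
     (\<forall>a. \<exists>b. \<exists>z\<in>Z - {0}. a * \<phi> z = \<phi> b)"

text \<open>Z^{-1}S inside A: elements phi s * (phi z)^{-1}, s in S, z in Z - {0}.\<close>
definition loc_part :: "'b::ring_1 set \<Rightarrow> ('b \<Rightarrow> 'a::ring_1) \<Rightarrow> 'b set \<Rightarrow> 'a set" where
  "loc_part Z \<phi> S = {a. \<exists>s\<in>S. \<exists>z\<in>Z - {0}. a * \<phi> z = \<phi> s}"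

definition graded_ideal :: "'a::ring_1 set \<Rightarrow> 'a set \<Rightarrow> 'a set \<Rightarrow> bool" where
  "graded_ideal A0 A1 I \<longleftrightarrow>
     add_subgroup I \<and> (\<forall>x\<in>I. \<forall>a. a * x \<in> I \<and> x * a \<in> I) \<and>
     (\<forall>x\<in>I. \<forall>x0\<in>A0. \<forall>x1\<in>A1. x = x0 + x1 \<longrightarrow> x0 \<in> I \<and> x1 \<in> I)"

definition simple_superalgebra :: "'a::ring_1 set \<Rightarrow> 'a set \<Rightarrow> bool" where
  "simple_superalgebra A0 A1 \<longleftrightarrow>
     superalgebra A0 A1 \<and> (\<exists>x y. x * y \<noteq> (0::'a)) \<and>
     (\<forall>I. graded_ideal A0 A1 I \<longrightarrow> I = {0} \<or> I = UNIV)"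

definition fin_dim_over :: "'a::ring_1 set \<Rightarrow> bool" where
  "fin_dim_over k \<longleftrightarrow>
     (\<exists>S. finite S \<and> (\<forall>a. \<exists>c. (\<forall>s\<in>S. c s \<in> k) \<and> a = (\<Sum>s\<in>S. c s * s)))"

end

theory Submission imports Defs begin

lemma center_iff: "x \<in> center \<longleftrightarrow> (\<forall>a. a * x = x * a)"
  by (simp add: center_def mult.assoc)

locale ctx =
  fixes B0 B1 :: "'b::ring_1 set" and Z :: "'b set" and \<phi> :: "'b \<Rightarrow> 'a::ring_1"
  assumes super: "superalgebra B0 B1"
    and Z_def: "Z = center \<inter> B0"
    and regular: "\<forall>z\<in>Z. z \<noteq> 0 \<longrightarrow> (\<forall>b. z * b = 0 \<longrightarrow> b = 0)"
    and loc: "is_localization Z \<phi>"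
    and simple: "simple_superalgebra (loc_part Z \<phi> B0) (loc_part Z \<phi> B1)"
begin

abbreviation "A0 \<equiv> loc_part Z \<phi> B0"
abbreviation "A1 \<equiv> loc_part Z \<phi> B1"
abbreviation "k \<equiv> loc_part Z \<phi> Z"

lemma phi_add: "\<phi> (x + y) = \<phi> x + \<phi> y" and phi_mult: "\<phi> (x * y) = \<phi> x * \<phi> y"
  and phi_1: "\<phi> 1 = 1" and phi_inj: "inj \<phi>"
  using loc unfolding is_localization_def by auto

lemma phi_0: "\<phi> 0 = 0"
  using phi_add[of 0 0] by simp

lemma phi_uminus: "\<phi> (- x) = - \<phi> x"
proof -
  have "\<phi> x + \<phi> (- x) = 0" using phi_add[of x "-x"] phi_0 by simp
  from add.inverse_unique[OF this] show ?thesis by simp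
qed

lemma phi_diff: "\<phi> (x - y) = \<phi> x - \<phi> y"
  using phi_add[of x "-y"] phi_uminus[of y] by simp

lemma phi_eq: "\<phi> x = \<phi> y \<longleftrightarrow> x = y"
  using phi_inj by (auto simp: inj_def)

lemma phi_eq0: "\<phi> x = 0 \<longleftrightarrow> x = 0"
  using phi_eq[of x 0] phi_0 by simp

lemma loc_inv: "z \<in> Z \<Longrightarrow> z \<noteq> 0 \<Longrightarrow> \<exists>w. w * \<phi> z = 1 \<and> \<phi> z * w = 1"
  using loc unfolding is_localization_def by auto

lemma loc_rep: "\<exists>b. \<exists>z\<in>Z - {0}. a * \<phi> z = \<phi> b"
  using loc unfolding is_localization_def by auto

lemma B0_sub: "add_subgroup B0" and B1_sub: "add_subgroup B1"
  and B_dec: "\<exists>x0\<in>B0. \<exists>x1\<in>B1. x = x0 + x1" and B01: "B0 \<inter> B1 = {0}"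
  and B00: "x \<in> B0 \<Longrightarrow> y \<in> B0 \<Longrightarrow> x * y \<in> B0"
  and B01m: "x \<in> B0 \<Longrightarrow> y \<in> B1 \<Longrightarrow> x * y \<in> B1"
  and B10m: "x \<in> B1 \<Longrightarrow> y \<in> B0 \<Longrightarrow> x * y \<in> B1"
  and B11: "x \<in> B1 \<Longrightarrow> y \<in> B1 \<Longrightarrow> x * y \<in> B0"
  using super unfolding superalgebra_def by auto

lemma B0_0: "0 \<in> B0" and B0_add: "x \<in> B0 \<Longrightarrow> y \<in> B0 \<Longrightarrow> x + y \<in> B0"
  and B0_neg: "x \<in> B0 \<Longrightarrow> - x \<in> B0"
  using B0_sub unfolding add_subgroup_def by auto
lemma B1_0: "0 \<in> B1" and B1_add: "x \<in> B1 \<Longrightarrow> y \<in> B1 \<Longrightarrow> x + y \<in> B1"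
  and B1_neg: "x \<in> B1 \<Longrightarrow> - x \<in> B1"
  using B1_sub unfolding add_subgroup_def by auto
lemma B0_diff: "x \<in> B0 \<Longrightarrow> y \<in> B0 \<Longrightarrow> x - y \<in> B0"
  using B0_add B0_neg by (metis diff_conv_add_uminus)
lemma B1_diff: "x \<in> B1 \<Longrightarrow> y \<in> B1 \<Longrightarrow> x - y \<in> B1"
  using B1_add B1_neg by (metis diff_conv_add_uminus)

lemma B_uniq: "x0 \<in> B0 \<Longrightarrow> x1 \<in> B1 \<Longrightarrow> y0 \<in> B0 \<Longrightarrow> y1 \<in> B1 \<Longrightarrow> x0 + x1 = y0 + y1
   \<Longrightarrow> x0 = y0 \<and> x1 = y1"
proof -
  assume h: "x0 \<in> B0" "x1 \<in> B1" "y0 \<in> B0" "y1 \<in> B1" "x0 + x1 = y0 + y1"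
  have "x0 - y0 = y1 - x1" using h(5) by (simp add: algebra_simps)
  moreover have "x0 - y0 \<in> B0" "y1 - x1 \<in> B1" using h B0_diff B1_diff by auto
  ultimately have "x0 - y0 \<in> B0 \<inter> B1" by simp
  then have "x0 - y0 = 0" using B01 by auto
  then show ?thesis using h(5) by simp
qed

definition q0 :: "'b \<Rightarrow> 'b" where "q0 b = (SOME x. x \<in> B0 \<and> b - x \<in> B1)"
definition q1 :: "'b \<Rightarrow> 'b" where "q1 b = b - q0 b"

lemma q_props: "q0 b \<in> B0 \<and> q1 b \<in> B1"
proof -
  obtain x0 x1 where "x0 \<in> B0" "x1 \<in> B1" "b = x0 + x1" using B_dec by blast
  then have "\<exists>x. x \<in> B0 \<and> b - x \<in> B1" by (intro exI[of _ x0]) simp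
  then show ?thesis unfolding q1_def q0_def by (rule someI_ex)
qed

lemma q0_B0: "q0 b \<in> B0" and q1_B1: "q1 b \<in> B1" using q_props by auto
lemma q_sum: "b = q0 b + q1 b" by (simp add: q1_def)

lemma q_uniq: "x0 \<in> B0 \<Longrightarrow> x1 \<in> B1 \<Longrightarrow> b = x0 + x1 \<Longrightarrow> q0 b = x0 \<and> q1 b = x1"
  using B_uniq[of "q0 b" "q1 b" x0 x1] q0_B0 q1_B1 q_sum by metis

lemma q0_add: "q0 (x + y) = q0 x + q0 y" and q1_add: "q1 (x + y) = q1 x + q1 y"
proof -
  have "q0 (x + y) = q0 x + q0 y \<and> q1 (x + y) = q1 x + q1 y"
    apply (rule q_uniq)
    using q0_B0 q1_B1 B0_add B1_add q_sum[of x] q_sum[of y] by (auto simp: algebra_simps)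
  then show "q0 (x + y) = q0 x + q0 y" "q1 (x + y) = q1 x + q1 y" by auto
qed

lemma q_mult0: "z \<in> B0 \<Longrightarrow> q0 (z * x) = z * q0 x \<and> q1 (z * x) = z * q1 x"
proof (rule q_uniq)
  assume z: "z \<in> B0"
  show "z * q0 x \<in> B0" using z q0_B0 B00 by auto
  show "z * q1 x \<in> B1" using z q1_B1 B01m by auto
  show "z * x = z * q0 x + z * q1 x" by (metis q_sum distrib_left)
qed

lemma one_B0: "1 \<in> B0"
proof -
  obtain e0 e1 where e: "e0 \<in> B0" "e1 \<in> B1" "1 = e0 + e1" using B_dec by blast
  have a: "e0 * e1 = 0"
  proof -
    have "e0 = e0 * e0 + e0 * e1" using e(3) by (metis distrib_left mult.right_neutral)
    then have "e0 + 0 = e0 * e0 + e0 * e1" by simp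
    then show ?thesis using B_uniq[of e0 0 "e0*e0" "e0*e1"] e B00 B01m B1_0 by metis
  qed
  have b: "e1 * e1 = 0"
  proof -
    have "e1 = e1 * e0 + e1 * e1" using e(3) by (metis distrib_left mult.right_neutral)
    then have "e1 * e1 + e1 * e0 = 0 + e1" by (simp add: add.commute)
    then show ?thesis using B_uniq[of "e1*e1" "e1*e0" 0 e1] e B11 B10m B0_0 by metis
  qed
  have "e1 = e0 * e1 + e1 * e1" using e(3) by (metis distrib_right mult.left_neutral)
  then have "e1 = 0" using a b by simp
  then show ?thesis using e by simp
qed

lemma Z_B0: "z \<in> Z \<Longrightarrow> z \<in> B0" and Z_comm: "z \<in> Z \<Longrightarrow> z * b = b * z"
  by (simp_all add: Z_def center_iff)

lemma Z_iff: "z \<in> Z \<longleftrightarrow> z \<in> B0 \<and> (\<forall>a. a * z = z * a)"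
  using Z_def center_iff by auto

lemma Z_0: "0 \<in> Z" and Z_1: "1 \<in> Z"
  using Z_iff B0_0 one_B0 by auto
lemma Z_add: "x \<in> Z \<Longrightarrow> y \<in> Z \<Longrightarrow> x + y \<in> Z"
  unfolding Z_iff using B0_add by (auto simp: algebra_simps)
lemma Z_mult: "x \<in> Z \<Longrightarrow> y \<in> Z \<Longrightarrow> x * y \<in> Z"
  unfolding Z_iff using B00 by (metis mult.assoc)
lemma Z_neg: "x \<in> Z \<Longrightarrow> - x \<in> Z"
  unfolding Z_iff using B0_neg by auto
lemma Z_mult_nz: "x \<in> Z \<Longrightarrow> y \<in> Z \<Longrightarrow> x \<noteq> 0 \<Longrightarrow> y \<noteq> 0 \<Longrightarrow> x * y \<noteq> 0"
  using regular by blast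


lemma phiZ_central: assumes z: "z \<in> Z" shows "\<phi> z * a = a * \<phi> z"
proof -
  obtain b' z' where bz: "z' \<in> Z" "z' \<noteq> 0" "a * \<phi> z' = \<phi> b'" using loc_rep by blast
  obtain w where w: "w * \<phi> z' = 1" "\<phi> z' * w = 1" using loc_inv bz by blast
  have "\<phi> z * a * \<phi> z' = \<phi> (z * b')" using bz by (simp add: phi_mult mult.assoc)
  also have "\<dots> = \<phi> (b' * z)" using Z_comm[OF z] by simp
  also have "\<dots> = a * \<phi> (z' * z)" using bz(3) by (simp add: phi_mult mult.assoc[symmetric])
  also have "\<dots> = a * \<phi> z * \<phi> z'" using Z_comm[OF z] by (simp add: phi_mult[symmetric] mult.assoc)
  finally have "\<phi> z * a * \<phi> z' * w = a * \<phi> z * \<phi> z' * w" by simp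
  then show ?thesis using w by (simp add: mult.assoc)
qed

lemma inv_central: fixes c :: 'a assumes c: "\<And>a. c * a = a * c" and w: "w * c = 1" "c * w = 1"
  shows "w * x = x * w"
proof -
  have "w * x = w * x * (c * w)" using w by simp
  also have "\<dots> = w * (c * x) * w" using c by (simp add: mult.assoc)
  also have "\<dots> = x * w" using w by (simp add: mult.assoc[symmetric])
  finally show ?thesis .
qed

lemma k_central: assumes c: "c \<in> k" shows "c * a = a * c"
proof -
  obtain s z where sz: "s \<in> Z" "z \<in> Z" "z \<noteq> 0" "c * \<phi> z = \<phi> s"
    using c unfolding loc_part_def by blast
  obtain w where w: "w * \<phi> z = 1" "\<phi> z * w = 1" using loc_inv sz by blast
  have wc: "\<And>x. w * x = x * w" using inv_central[OF phiZ_central[OF sz(2)] w] by simp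
  have "c = \<phi> s * w" using sz(4) w by (metis mult.assoc mult.right_neutral)
  then show ?thesis using wc phiZ_central[OF sz(1)] by (metis mult.assoc)
qed

lemma k_A0: "c \<in> k \<Longrightarrow> c \<in> A0"
  unfolding loc_part_def using Z_B0 by blast

lemma A_super: "superalgebra A0 A1" and A_nontriv: "\<exists>x y. x * y \<noteq> (0::'a)"
  and A_simple: "graded_ideal A0 A1 I \<Longrightarrow> I = {0} \<or> I = UNIV"
  using simple unfolding simple_superalgebra_def by auto

lemma one_nz: "(1::'a) \<noteq> 0"
  using A_nontriv by (metis mult_1 mult_zero_left)  

lemma A0_sub: "add_subgroup A0" and A1_sub: "add_subgroup A1"
  and A_dec: "\<exists>x0\<in>A0. \<exists>x1\<in>A1. x = x0 + x1" and A01: "A0 \<inter> A1 = {0}"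
  and A00: "x \<in> A0 \<Longrightarrow> y \<in> A0 \<Longrightarrow> x * y \<in> A0"
  and A01m: "x \<in> A0 \<Longrightarrow> y \<in> A1 \<Longrightarrow> x * y \<in> A1"
  and A10m: "x \<in> A1 \<Longrightarrow> y \<in> A0 \<Longrightarrow> x * y \<in> A1"
  and A11: "x \<in> A1 \<Longrightarrow> y \<in> A1 \<Longrightarrow> x * y \<in> A0"
  using A_super unfolding superalgebra_def by auto

lemma A0_0: "0 \<in> A0" and A0_add: "x \<in> A0 \<Longrightarrow> y \<in> A0 \<Longrightarrow> x + y \<in> A0"
  and A0_neg: "x \<in> A0 \<Longrightarrow> - x \<in> A0"
  using A0_sub unfolding add_subgroup_def by auto
lemma A1_0: "0 \<in> A1" and A1_add: "x \<in> A1 \<Longrightarrow> y \<in> A1 \<Longrightarrow> x + y \<in> A1"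
  and A1_neg: "x \<in> A1 \<Longrightarrow> - x \<in> A1"
  using A1_sub unfolding add_subgroup_def by auto
lemma A0_diff: "x \<in> A0 \<Longrightarrow> y \<in> A0 \<Longrightarrow> x - y \<in> A0"
  using A0_add A0_neg by (metis diff_conv_add_uminus)
lemma A1_diff: "x \<in> A1 \<Longrightarrow> y \<in> A1 \<Longrightarrow> x - y \<in> A1"
  using A1_add A1_neg by (metis diff_conv_add_uminus)

lemma A_uniq: "x0 \<in> A0 \<Longrightarrow> x1 \<in> A1 \<Longrightarrow> y0 \<in> A0 \<Longrightarrow> y1 \<in> A1 \<Longrightarrow> x0 + x1 = y0 + y1
   \<Longrightarrow> x0 = y0 \<and> x1 = y1"
proof -
  assume h: "x0 \<in> A0" "x1 \<in> A1" "y0 \<in> A0" "y1 \<in> A1" "x0 + x1 = y0 + y1"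
  have "x0 - y0 = y1 - x1" using h(5) by (simp add: algebra_simps)
  moreover have "x0 - y0 \<in> A0" "y1 - x1 \<in> A1" using h A0_diff A1_diff by auto
  ultimately have "x0 - y0 \<in> A0 \<inter> A1" by simp
  then have "x0 - y0 = 0" using A01 by auto
  then show ?thesis using h(5) by simp
qed

lemma one_nzB: "(1::'b) \<noteq> 0" using one_nz phi_1 phi_0 by metis

lemma loc_part_phi: "b \<in> S \<Longrightarrow> \<phi> b \<in> loc_part Z \<phi> S"
  unfolding loc_part_def
  by (intro CollectI bexI[of _ b] bexI[of _ 1]) (auto simp: phi_1 Z_1 one_nzB)

lemma phi_B0: "b \<in> B0 \<Longrightarrow> \<phi> b \<in> A0" and phi_B1: "b \<in> B1 \<Longrightarrow> \<phi> b \<in> A1"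
  and phi_Z: "b \<in> Z \<Longrightarrow> \<phi> b \<in> k"
  by (rule loc_part_phi, assumption)+

lemma A0_phi: assumes "\<phi> b \<in> A0" shows "b \<in> B0"
proof -
  have "\<phi> (q1 b) = \<phi> b - \<phi> (q0 b)" using q_sum[of b] by (metis add_diff_cancel_left' phi_add)
  then have "\<phi> (q1 b) \<in> A0" using assms phi_B0[OF q0_B0] A0_diff by simp
  moreover have "\<phi> (q1 b) \<in> A1" using phi_B1[OF q1_B1] .
  ultimately have "\<phi> (q1 b) = 0" using A01 by auto
  then have "q1 b = 0" using phi_eq0 by simp
  then show ?thesis using q_sum[of b] q0_B0[of b] by simp
qed

lemma central_A0_k: assumes c0: "c \<in> A0" and cc: "\<And>a. c * a = a * c" shows "c \<in> k"
proof -
  obtain b z where bz: "z \<in> Z" "z \<noteq> 0" "c * \<phi> z = \<phi> b" using loc_rep by blast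
  have "\<phi> b \<in> A0" using bz c0 A00 phi_B0 Z_B0 by metis
  then have b0: "b \<in> B0" by (rule A0_phi)
  have "\<And>a. a * b = b * a"
  proof -
    fix a
    have "\<phi> (a * b) = \<phi> a * c * \<phi> z" using bz by (simp add: phi_mult mult.assoc)
    also have "\<dots> = c * \<phi> z * \<phi> a" using cc phiZ_central[OF bz(1)] by (metis mult.assoc)
    also have "\<dots> = \<phi> (b * a)" using bz by (simp add: phi_mult)
    finally show "a * b = b * a" using phi_eq by blast
  qed
  then have "b \<in> Z" using Z_iff b0 by auto
  then show ?thesis unfolding loc_part_def using bz by blast
qed

lemma phi_k: assumes "\<phi> b \<in> k" shows "b \<in> Z"
proof -
  have b0: "b \<in> B0" using A0_phi k_A0 assms by blast
  have "\<And>a. a * b = b * a" using k_central[OF assms] phi_eq phi_mult by metis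
  then show ?thesis using Z_iff b0 by auto
qed

lemma k_0: "0 \<in> k" using phi_Z[OF Z_0] phi_0 by simp
lemma k_1: "1 \<in> k" using phi_Z[OF Z_1] phi_1 by simp

lemma k_rep: assumes "c \<in> k" obtains s z where "s \<in> Z" "z \<in> Z" "z \<noteq> 0" "c * \<phi> z = \<phi> s"
  using assms unfolding loc_part_def by blast

lemma k_add: assumes c: "c \<in> k" and d: "d \<in> k" shows "c + d \<in> k"
proof -
  obtain s z where sz: "s \<in> Z" "z \<in> Z" "z \<noteq> 0" "c * \<phi> z = \<phi> s" using k_rep[OF c] by blast
  obtain s' z' where sz': "s' \<in> Z" "z' \<in> Z" "z' \<noteq> 0" "d * \<phi> z' = \<phi> s'" using k_rep[OF d] by blast
  have "(c + d) * \<phi> (z * z') = c * \<phi> z * \<phi> z' + d * \<phi> z' * \<phi> z"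
    using phiZ_central[OF sz(2)] by (simp add: phi_mult distrib_right mult.assoc)
  also have "\<dots> = \<phi> (s * z' + s' * z)" using sz sz' by (simp add: phi_mult phi_add)
  finally have "(c + d) * \<phi> (z * z') = \<phi> (s * z' + s' * z)" .
  moreover have "z * z' \<in> Z" "z * z' \<noteq> 0" "s * z' + s' * z \<in> Z"
    using sz sz' Z_mult Z_add Z_mult_nz by auto
  ultimately show ?thesis unfolding loc_part_def by blast
qed

lemma k_mult: assumes c: "c \<in> k" and d: "d \<in> k" shows "c * d \<in> k"
proof -
  obtain s z where sz: "s \<in> Z" "z \<in> Z" "z \<noteq> 0" "c * \<phi> z = \<phi> s" using k_rep[OF c] by blast
  obtain s' z' where sz': "s' \<in> Z" "z' \<in> Z" "z' \<noteq> 0" "d * \<phi> z' = \<phi> s'" using k_rep[OF d] by blast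
  have "(c * d) * \<phi> (z * z') = (c * \<phi> z) * (d * \<phi> z')"
    using phiZ_central[OF sz(2)] by (simp add: phi_mult mult.assoc)
  also have "\<dots> = \<phi> (s * s')" using sz sz' by (simp add: phi_mult)
  finally have "(c * d) * \<phi> (z * z') = \<phi> (s * s')" .
  moreover have "z * z' \<in> Z" "z * z' \<noteq> 0" "s * s' \<in> Z"
    using sz sz' Z_mult Z_mult_nz by auto
  ultimately show ?thesis unfolding loc_part_def by blast
qed

lemma k_neg: assumes c: "c \<in> k" shows "- c \<in> k"
proof -
  obtain s z where sz: "s \<in> Z" "z \<in> Z" "z \<noteq> 0" "c * \<phi> z = \<phi> s" using k_rep[OF c] by blast
  have "(- c) * \<phi> z = \<phi> (- s)" using sz by (simp add: phi_uminus)
  then show ?thesis unfolding loc_part_def using sz Z_neg by blast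
qed

lemma k_diff: "c \<in> k \<Longrightarrow> d \<in> k \<Longrightarrow> c - d \<in> k"
  using k_add k_neg by (metis diff_conv_add_uminus)

lemma k_inv: assumes c: "c \<in> k" "c \<noteq> 0" shows "\<exists>d\<in>k. d * c = 1 \<and> c * d = 1"
proof -
  obtain s z where sz: "s \<in> Z" "z \<in> Z" "z \<noteq> 0" "c * \<phi> z = \<phi> s" using k_rep[OF c(1)] by blast
  have "s \<noteq> 0"
  proof
    assume "s = 0"
    then have "c * \<phi> z = 0" using sz phi_0 by simp
    moreover obtain w where "\<phi> z * w = 1" using loc_inv sz by blast
    ultimately have "c = 0" by (metis mult.assoc mult.right_neutral mult_zero_left)
    then show False using c by simp
  qed
  obtain w where w: "w * \<phi> s = 1" "\<phi> s * w = 1" using loc_inv sz \<open>s \<noteq> 0\<close> by blast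
  have wc: "\<And>x. w * x = x * w" using inv_central[OF phiZ_central[OF sz(1)] w] by simp
  define d where "d = \<phi> z * w"
  have "d * \<phi> s = \<phi> z" using w by (simp add: d_def mult.assoc)
  then have dk: "d \<in> k" unfolding loc_part_def using sz \<open>s \<noteq> 0\<close> by blast
  have "d * c = 1" unfolding d_def using sz w wc phiZ_central[OF sz(2)] by (metis mult.assoc)
  then show ?thesis using dk k_central[OF dk] by metis
qed

definition p0 :: "'a \<Rightarrow> 'a" where "p0 a = (SOME x. x \<in> A0 \<and> a - x \<in> A1)"
definition p1 :: "'a \<Rightarrow> 'a" where "p1 a = a - p0 a"

lemma p_props: "p0 a \<in> A0 \<and> p1 a \<in> A1"
proof -
  obtain x0 x1 where "x0 \<in> A0" "x1 \<in> A1" "a = x0 + x1" using A_dec by blast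
  then have "\<exists>x. x \<in> A0 \<and> a - x \<in> A1" by (intro exI[of _ x0]) simp
  then show ?thesis unfolding p1_def p0_def by (rule someI_ex)
qed

lemma p0_A0: "p0 a \<in> A0" and p1_A1: "p1 a \<in> A1" using p_props by auto
lemma p_sum: "a = p0 a + p1 a" by (simp add: p1_def)

lemma p_uniq: "x0 \<in> A0 \<Longrightarrow> x1 \<in> A1 \<Longrightarrow> a = x0 + x1 \<Longrightarrow> p0 a = x0 \<and> p1 a = x1"
  using A_uniq[of "p0 a" "p1 a" x0 x1] p0_A0 p1_A1 p_sum by metis

lemma p0_add: "p0 (x + y) = p0 x + p0 y" and p1_add: "p1 (x + y) = p1 x + p1 y"
proof -
  have "p0 (x + y) = p0 x + p0 y \<and> p1 (x + y) = p1 x + p1 y"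
    apply (rule p_uniq)
    using p0_A0 p1_A1 A0_add A1_add p_sum[of x] p_sum[of y] by (auto simp: algebra_simps)
  then show "p0 (x + y) = p0 x + p0 y" "p1 (x + y) = p1 x + p1 y" by auto
qed

lemma p_mult: "p0 (a * x) = p0 a * p0 x + p1 a * p1 x \<and> p1 (a * x) = p0 a * p1 x + p1 a * p0 x"
proof (rule p_uniq)
  show "p0 a * p0 x + p1 a * p1 x \<in> A0" using A0_add A00 A11 p0_A0 p1_A1 by auto
  show "p0 a * p1 x + p1 a * p0 x \<in> A1" using A1_add A01m A10m p0_A0 p1_A1 by auto
  have "a * x = (p0 a + p1 a) * (p0 x + p1 x)" using p_sum by metis
  then show "a * x = p0 a * p0 x + p1 a * p1 x + (p0 a * p1 x + p1 a * p0 x)"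
    by (simp add: algebra_simps)
qed

lemma p0_k: assumes c: "c \<in> k" shows "p0 (c * a) = c * p0 a"
proof -
  have "p0 (c * a) = c * p0 a \<and> p1 (c * a) = c * p1 a"
  proof (rule p_uniq)
    show "c * p0 a \<in> A0" using A00 k_A0[OF c] p0_A0 by auto
    show "c * p1 a \<in> A1" using A01m k_A0[OF c] p1_A1 by auto
    show "c * a = c * p0 a + c * p1 a" by (metis p_sum distrib_left)
  qed
  then show ?thesis by simp
qed

lemma p_phi: "p0 (\<phi> b) = \<phi> (q0 b) \<and> p1 (\<phi> b) = \<phi> (q1 b)"
  by (rule p_uniq) (auto simp: phi_B0 phi_B1 q0_B0 q1_B1 phi_add[symmetric] q_sum[symmetric])

lemma p_A0: "x \<in> A0 \<Longrightarrow> p0 x = x \<and> p1 x = 0"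
  by (rule p_uniq) (auto simp: A1_0)

lemma p0_1: "p0 1 = 1" using p_A0 phi_B0[OF one_B0] phi_1 by simp


inductive_set NN :: "('a \<Rightarrow> 'a) set" where
  NL: "(\<lambda>x. a * x) \<in> NN"
| NR: "(\<lambda>x. x * a) \<in> NN"
| NP: "p0 \<in> NN"
| Ncomp: "f \<in> NN \<Longrightarrow> g \<in> NN \<Longrightarrow> (\<lambda>x. f (g x)) \<in> NN"
| Nadd: "f \<in> NN \<Longrightarrow> g \<in> NN \<Longrightarrow> (\<lambda>x. f x + g x) \<in> NN"

lemma N_lin: "f \<in> NN \<Longrightarrow> (\<forall>x y. f (x + y) = f x + f y) \<and> (\<forall>c x. c \<in> k \<longrightarrow> f (c * x) = c * f x)"
proof (induction rule: NN.induct)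
  case (NL a)
  have "a * (c * x) = c * (a * x)" if "c \<in> k" for c x
    using k_central[OF that, of a] by (metis mult.assoc)
  then show ?case by (simp add: distrib_left)
next
  case (NR a)
  then show ?case by (auto simp: distrib_right mult.assoc)
next
  case NP
  then show ?case using p0_add p0_k by auto
next
  case (Ncomp f g)
  then show ?case by auto
next
  case (Nadd f g)
  then show ?case by (auto simp: algebra_simps)
qed

lemma N_add: "f \<in> NN \<Longrightarrow> f (x + y) = f x + f y" using N_lin by blast
lemma N_k: "f \<in> NN \<Longrightarrow> c \<in> k \<Longrightarrow> f (c * x) = c * f x" using N_lin by blast
lemma N_0: "f \<in> NN \<Longrightarrow> f 0 = 0" using N_add[of f 0 0] by simp

lemma N_id: "(\<lambda>x. x) \<in> NN"
proof -
  have "(\<lambda>x. 1 * x) \<in> NN" by (rule NL)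
  moreover have "(\<lambda>x. (1::'a) * x) = (\<lambda>x. x)" by (rule ext) simp
  ultimately show ?thesis by simp
qed

lemma N_diff: assumes "f \<in> NN" "g \<in> NN" shows "(\<lambda>x. f x - g x) \<in> NN"
proof -
  have "(\<lambda>x. f x + (- 1) * g x) \<in> NN" using Nadd[OF assms(1) Ncomp[OF NL assms(2)]] .
  then show ?thesis by simp
qed

lemma N_p1: "p1 \<in> NN"
proof -
  have "(\<lambda>x. x - p0 x) \<in> NN" using N_diff N_id NP by blast
  then show ?thesis by (simp add: p1_def[abs_def])
qed

lemma N_sum: assumes f: "f \<in> NN" shows "finite I \<Longrightarrow> (\<forall>i\<in>I. c i \<in> k) \<Longrightarrow>
   f (\<Sum>i\<in>I. c i * v i) = (\<Sum>i\<in>I. c i * f (v i))"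
proof (induction I rule: finite_induct)
  case empty
  then show ?case using N_0[OF f] by simp
next
  case (insert x F)
  then show ?case using N_add[OF f] N_k[OF f] by simp
qed

lemma Z_nz_k: "z \<in> Z \<Longrightarrow> z \<noteq> 0 \<Longrightarrow> \<phi> z \<in> k \<and> \<phi> z \<noteq> 0"
  using phi_Z phi_eq0 by auto

lemma N_denom: "f \<in> NN \<Longrightarrow> \<exists>z\<in>Z. z \<noteq> 0 \<and> (\<forall>b. \<phi> z * f (\<phi> b) \<in> range \<phi>)"
proof (induction rule: NN.induct)
  case (NL a)
  obtain s z where sz: "z \<in> Z" "z \<noteq> 0" "a * \<phi> z = \<phi> s" using loc_rep by blast
  have "\<phi> z * (a * \<phi> b) = \<phi> (s * b)" for b
  proof -
    have "\<phi> z * (a * \<phi> b) = (a * \<phi> z) * \<phi> b"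
      using phiZ_central[OF sz(1), of a] by (metis mult.assoc)
    then show ?thesis using sz(3) by (simp add: phi_mult)
  qed
  then show ?case using sz by auto
next
  case (NR a)
  obtain s z where sz: "z \<in> Z" "z \<noteq> 0" "a * \<phi> z = \<phi> s" using loc_rep by blast
  have "\<phi> z * (\<phi> b * a) = \<phi> (b * s)" for b
  proof -
    have "\<phi> z * (\<phi> b * a) = \<phi> b * (a * \<phi> z)"
      using phiZ_central[OF sz(1), of "\<phi> b"] phiZ_central[OF sz(1), of a] by (metis mult.assoc)
    then show ?thesis using sz(3) by (simp add: phi_mult)
  qed
  then show ?case using sz by auto
next
  case NP
  have "\<phi> 1 * p0 (\<phi> b) = \<phi> (q0 b)" for b using p_phi phi_1 by simp
  then show ?case using Z_1 one_nzB by (metis rangeI)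
next
  case (Ncomp f g)
  obtain z1 where z1: "z1 \<in> Z" "z1 \<noteq> 0" "\<forall>b. \<phi> z1 * f (\<phi> b) \<in> range \<phi>" using Ncomp by blast
  obtain z2 where z2: "z2 \<in> Z" "z2 \<noteq> 0" "\<forall>b. \<phi> z2 * g (\<phi> b) \<in> range \<phi>" using Ncomp by blast
  have "\<phi> (z1 * z2) * f (g (\<phi> b)) \<in> range \<phi>" for b
  proof -
    obtain b2 where b2: "\<phi> z2 * g (\<phi> b) = \<phi> b2" using z2 by blast
    have "\<phi> (z1 * z2) * f (g (\<phi> b)) = \<phi> z1 * f (\<phi> z2 * g (\<phi> b))"
      using N_k[OF Ncomp(1) phi_Z[OF z2(1)]] by (simp add: phi_mult mult.assoc)
    then show ?thesis using b2 z1 by simp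
  qed
  then show ?case using z1 z2 Z_mult Z_mult_nz by blast
next
  case (Nadd f g)
  obtain z1 where z1: "z1 \<in> Z" "z1 \<noteq> 0" "\<forall>b. \<phi> z1 * f (\<phi> b) \<in> range \<phi>" using Nadd by blast
  obtain z2 where z2: "z2 \<in> Z" "z2 \<noteq> 0" "\<forall>b. \<phi> z2 * g (\<phi> b) \<in> range \<phi>" using Nadd by blast
  have "\<phi> (z1 * z2) * (f (\<phi> b) + g (\<phi> b)) \<in> range \<phi>" for b
  proof -
    obtain b1 where b1: "\<phi> z1 * f (\<phi> b) = \<phi> b1" using z1 by blast
    obtain b2 where b2: "\<phi> z2 * g (\<phi> b) = \<phi> b2" using z2 by blast
    have "\<phi> (z1 * z2) * (f (\<phi> b) + g (\<phi> b)) = \<phi> z2 * (\<phi> z1 * f (\<phi> b)) + \<phi> z1 * (\<phi> z2 * g (\<phi> b))"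
    proof -
      have "\<phi> (z1 * z2) * f (\<phi> b) = \<phi> z2 * (\<phi> z1 * f (\<phi> b))"
        using phiZ_central[OF z1(1), of "\<phi> z2"] by (metis mult.assoc phi_mult)
      moreover have "\<phi> (z1 * z2) * g (\<phi> b) = \<phi> z1 * (\<phi> z2 * g (\<phi> b))"
        by (metis mult.assoc phi_mult)
      ultimately show ?thesis by (simp add: distrib_left)
    qed
    also have "\<dots> = \<phi> (z2 * b1 + z1 * b2)" using b1 b2 by (simp add: phi_mult phi_add)
    finally show ?thesis by simp
  qed
  then show ?case using z1 z2 Z_mult Z_mult_nz by blast
qed


definition spanI :: "'a set \<Rightarrow> ('a \<Rightarrow> 'a) \<Rightarrow> 'a set" where
  "spanI I v = {y. \<exists>c. (\<forall>i\<in>I. c i \<in> k) \<and> y = (\<Sum>i\<in>I. c i * v i)}"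

lemma reduce:
  assumes f: "f \<in> NN" and I: "finite I" and rg: "range g \<subseteq> spanI I v"
    and nz: "g x1 \<noteq> 0" and fz: "f (g x1) = 0"
  shows "\<exists>j\<in>I. range (\<lambda>x. f (g x)) \<subseteq> spanI (I - {j}) (\<lambda>i. f (v i))"
proof -
  obtain c where c: "\<forall>i\<in>I. c i \<in> k" "g x1 = (\<Sum>i\<in>I. c i * v i)"
    using rg unfolding spanI_def by blast
  obtain j where j: "j \<in> I" "c j \<noteq> 0"
  proof (rule ccontr)
    assume "\<not> thesis"
    then have "\<forall>i\<in>I. c i = 0" using that by blast
    then have "g x1 = 0" using c(2) by simp
    then show False using nz by simp
  qed
  obtain d where d: "d \<in> k" "d * c j = 1" using k_inv[of "c j"] c j by blast
  have "0 = (\<Sum>i\<in>I. c i * f (v i))" using fz c N_sum[OF f I] by simp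
  also have "\<dots> = c j * f (v j) + (\<Sum>i\<in>I - {j}. c i * f (v i))" using sum.remove[OF I j(1)] by simp
  finally have e1: "c j * f (v j) = - (\<Sum>i\<in>I - {j}. c i * f (v i))"
    by (simp add: eq_neg_iff_add_eq_0)
  have fvj: "f (v j) = (\<Sum>i\<in>I - {j}. (- (d * c i)) * f (v i))"
  proof -
    have "f (v j) = d * (c j * f (v j))" using d by (simp add: mult.assoc[symmetric])
    also have "\<dots> = - (\<Sum>i\<in>I - {j}. d * (c i * f (v i)))" using e1 by (simp add: sum_distrib_left)
    also have "\<dots> = (\<Sum>i\<in>I - {j}. (- (d * c i)) * f (v i))"
      by (simp add: sum_negf[symmetric] mult.assoc)
    finally show ?thesis .
  qed
  have "f (g x) \<in> spanI (I - {j}) (\<lambda>i. f (v i))" for x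
  proof -
    obtain e where e: "\<forall>i\<in>I. e i \<in> k" "g x = (\<Sum>i\<in>I. e i * v i)"
      using rg unfolding spanI_def by blast
    have "f (g x) = (\<Sum>i\<in>I. e i * f (v i))" using e N_sum[OF f I] by simp
    also have "\<dots> = e j * f (v j) + (\<Sum>i\<in>I - {j}. e i * f (v i))" using sum.remove[OF I j(1)] by simp
    also have "\<dots> = (\<Sum>i\<in>I - {j}. (- (e j * d * c i)) * f (v i)) + (\<Sum>i\<in>I - {j}. e i * f (v i))"
      using fvj by (simp add: sum_distrib_left mult.assoc)
    also have "\<dots> = (\<Sum>i\<in>I - {j}. (e i - e j * d * c i) * f (v i))"
      by (simp add: sum.distrib[symmetric] algebra_simps)
    finally have "f (g x) = (\<Sum>i\<in>I - {j}. (e i - e j * d * c i) * f (v i))" .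
    moreover have "\<forall>i\<in>I - {j}. e i - e j * d * c i \<in> k"
      using e(1) c(1) d(1) j(1) k_diff k_mult by auto
    ultimately show ?thesis unfolding spanI_def
      by (intro CollectI exI[of _ "\<lambda>i. e i - e j * d * c i"]) simp
  qed
  then show ?thesis using j by blast
qed

lemma J_ideal: assumes w: "w \<noteq> 0" shows "\<forall>a. \<exists>f\<in>NN. f w = a"
proof -
  define J where "J = {f w | f. f \<in> NN}"
  have "graded_ideal A0 A1 J"
    unfolding graded_ideal_def add_subgroup_def
  proof (intro conjI ballI allI impI)
    have "((*) 0) \<in> NN" by (rule NL)
    then show "0 \<in> J" unfolding J_def by (intro CollectI exI[of _ "(*) 0"]) simp
  next
    fix x y assume "x \<in> J" "y \<in> J"
    then obtain f g where "f \<in> NN" "g \<in> NN" "x = f w" "y = g w" unfolding J_def by blast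
    then show "x + y \<in> J" unfolding J_def using Nadd by force
  next
    fix x assume "x \<in> J"
    then obtain f where f: "f \<in> NN" "x = f w" unfolding J_def by blast
    have "(\<lambda>y. (-1) * f y) \<in> NN" using Ncomp[OF NL f(1)] .
    then show "- x \<in> J" unfolding J_def using f by force
  next
    fix x a assume "x \<in> J"
    then obtain f where f: "f \<in> NN" "x = f w" unfolding J_def by blast
    have "(\<lambda>y. a * f y) \<in> NN" using Ncomp[OF NL f(1)] .
    then show "a * x \<in> J" unfolding J_def using f by force
  next
    fix x a assume "x \<in> J"
    then obtain f where f: "f \<in> NN" "x = f w" unfolding J_def by blast
    have "(\<lambda>y. f y * a) \<in> NN" using Ncomp[OF NR f(1)] .
    then show "x * a \<in> J" unfolding J_def using f by force
  next
    fix x x0 x1 assume h: "x \<in> J" "x0 \<in> A0" "x1 \<in> A1" "x = x0 + x1"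
    then obtain f where f: "f \<in> NN" "x = f w" unfolding J_def by blast
    have pp: "p0 x = x0" "p1 x = x1" using p_uniq h by auto
    have "(\<lambda>y. p0 (f y)) \<in> NN" using Ncomp[OF NP f(1)] .
    then show "x0 \<in> J" unfolding J_def using f pp by force
    have "(\<lambda>y. p1 (f y)) \<in> NN" using Ncomp[OF N_p1 f(1)] .
    then show "x1 \<in> J" unfolding J_def using f pp by force
  qed
  moreover have "w \<in> J" unfolding J_def using N_id by force
  ultimately have "J = UNIV" using A_simple w by blast
  show ?thesis
  proof
    fix a
    have "a \<in> J" using \<open>J = UNIV\<close> by simp
    then show "\<exists>f\<in>NN. f w = a" unfolding J_def by blast
  qed
qed

lemma get_t: assumes fd: "fin_dim_over k"
  shows "\<exists>t\<in>NN. (\<forall>x. t x \<in> k) \<and> (\<exists>x. t x \<noteq> 0)"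
proof -
  define P where "P r \<longleftrightarrow> (\<exists>g\<in>NN. (\<exists>x. g x \<noteq> 0) \<and>
       (\<exists>I v. finite I \<and> card I = r \<and> range g \<subseteq> spanI I v))" for r
  obtain S where S: "finite S" "\<forall>a. \<exists>c. (\<forall>s\<in>S. c s \<in> k) \<and> a = (\<Sum>s\<in>S. c s * s)"
    using fd unfolding fin_dim_over_def by blast
  have "P (card S)" unfolding P_def
  proof (intro bexI[OF _ N_id] conjI exI)
    show "(1::'a) \<noteq> 0" by (rule one_nz)
    show "finite S" "card S = card S" by (auto simp: S)
    show "range (\<lambda>x. x) \<subseteq> spanI S (\<lambda>s. s)" unfolding spanI_def using S(2) by auto
  qed
  define r where "r = (LEAST r. P r)"
  have Pr: "P r" unfolding r_def using \<open>P (card S)\<close> by (rule LeastI)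
  have minr: "\<And>r'. r' < r \<Longrightarrow> \<not> P r'" unfolding r_def by (rule not_less_Least)
  obtain g x1 I v where g: "g \<in> NN" "g x1 \<noteq> 0" "finite I" "card I = r" "range g \<subseteq> spanI I v"
    using Pr unfolding P_def by blast
  have Zero: "\<forall>x. f (g x) = 0" if f: "f \<in> NN" "f (g x1) = 0" for f
  proof (rule ccontr)
    assume nz: "\<not> (\<forall>x. f (g x) = 0)"
    obtain j where j: "j \<in> I" "range (\<lambda>x. f (g x)) \<subseteq> spanI (I - {j}) (\<lambda>i. f (v i))"
      using reduce[OF f(1) g(3) g(5) g(2) f(2)] by blast
    have "P (card (I - {j}))" unfolding P_def
    proof (rule bexI[OF _ Ncomp[OF f(1) g(1)]], intro conjI)
      show "\<exists>x. f (g x) \<noteq> 0" using nz by blast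
      show "\<exists>I' v'. finite I' \<and> card I' = card (I - {j}) \<and> range (\<lambda>x. f (g x)) \<subseteq> spanI I' v'"
        using g(3) j(2) by (intro exI[of _ "I - {j}"] exI[of _ "\<lambda>i. f (v i)"]) simp
    qed
    moreover have "card (I - {j}) < r" using card_Diff1_less[OF g(3) j(1)] g(4) by simp
    ultimately show False using minr by blast
  qed
  have same: "f1 (g x) = f2 (g x)" if "f1 \<in> NN" "f2 \<in> NN" "f1 (g x1) = f2 (g x1)" for f1 f2 x
    using Zero[OF N_diff[OF that(1,2)]] that(3) by simp
  obtain n1 where n1: "n1 \<in> NN" "n1 (g x1) = 1" using J_ideal[OF g(2)] by blast
  have tk: "n1 (g x) \<in> k" for x
  proof (rule central_A0_k)
    show "n1 (g x) * a = a * n1 (g x)" for a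
      using same[OF Ncomp[OF NR[of a] n1(1)] Ncomp[OF NL[of a] n1(1)], of x] n1(2) by simp
    have "p0 (n1 (g x)) = n1 (g x)" using same[OF Ncomp[OF NP n1(1)] n1(1)] n1(2) p0_1 by simp
    then show "n1 (g x) \<in> A0" using p0_A0 by metis
  qed
  show ?thesis
  proof (rule bexI[OF _ Ncomp[OF n1(1) g(1)]], intro conjI allI)
    show "\<And>x. n1 (g x) \<in> k" by (rule tk)
    show "\<exists>x. n1 (g x) \<noteq> 0" using n1(2) one_nz by metis
  qed
qed


lemma N_neg: "f \<in> NN \<Longrightarrow> f (- x) = - f x"
  using N_add[of f x "-x"] N_0[of f] by (simp add: eq_neg_iff_add_eq_0 add.commute)

lemma p_A1: "x \<in> A1 \<Longrightarrow> p0 x = 0 \<and> p1 x = x"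
  by (rule p_uniq) (auto simp: A0_0)

lemma p_neg: "p0 (- x) = - p0 x \<and> p1 (- x) = - p1 x"
proof (rule p_uniq)
  show "- p0 x \<in> A0" "- p1 x \<in> A1" using A0_neg A1_neg p0_A0 p1_A1 by auto
  have "- x = - (p0 x + p1 x)" using p_sum by metis
  then show "- x = - p0 x + - p1 x" by simp
qed

lemma I_ideal: assumes t: "t \<in> NN"
  shows "graded_ideal A0 A1 {x. \<forall>a a'. t (a * p0 x * a') = 0 \<and> t (a * p1 x * a') = 0}"
    (is "graded_ideal A0 A1 ?I")
  unfolding graded_ideal_def add_subgroup_def
proof (intro conjI ballI allI impI)
  show "0 \<in> ?I" using p_A0[OF A0_0] N_0[OF t] by simp
next
  fix x y assume "x \<in> ?I" "y \<in> ?I"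
  then show "x + y \<in> ?I" using N_add[OF t] by (simp add: p0_add p1_add distrib_left distrib_right)
next
  fix x assume "x \<in> ?I"
  then show "- x \<in> ?I" using N_neg[OF t] by (simp add: p_neg)
next
  fix x b assume x: "x \<in> ?I"
  show "b * x \<in> ?I"
  proof (simp, intro allI conjI)
    fix a a'
    have "t (a * p0 (b * x) * a') = t ((a * p0 b) * p0 x * a') + t ((a * p1 b) * p1 x * a')"
      using p_mult N_add[OF t] by (simp add: distrib_left distrib_right mult.assoc)
    then show "t (a * p0 (b * x) * a') = 0" using x by simp
    have "t (a * p1 (b * x) * a') = t ((a * p0 b) * p1 x * a') + t ((a * p1 b) * p0 x * a')"
      using p_mult N_add[OF t] by (simp add: distrib_left distrib_right mult.assoc)
    then show "t (a * p1 (b * x) * a') = 0" using x by simp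
  qed
  show "x * b \<in> ?I"
  proof (simp, intro allI conjI)
    fix a a'
    have "t (a * p0 (x * b) * a') = t (a * p0 x * (p0 b * a')) + t (a * p1 x * (p1 b * a'))"
      using p_mult N_add[OF t] by (simp add: distrib_left distrib_right mult.assoc)
    then show "t (a * p0 (x * b) * a') = 0" using x by simp
    have "t (a * p1 (x * b) * a') = t (a * p0 x * (p1 b * a')) + t (a * p1 x * (p0 b * a'))"
      using p_mult N_add[OF t] by (simp add: distrib_left distrib_right mult.assoc)
    then show "t (a * p1 (x * b) * a') = 0" using x by simp
  qed
next
  fix x x0 x1 assume h: "x \<in> ?I" "x0 \<in> A0" "x1 \<in> A1" "x = x0 + x1"
  have pp: "p0 x = x0" "p1 x = x1" using p_uniq h by auto
  show "x0 \<in> ?I" using h(1) pp p_A0[OF h(2)] N_0[OF t] by simp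
  show "x1 \<in> ?I" using h(1) pp p_A1[OF h(3)] N_0[OF t] by simp
qed

lemma final: assumes fd: "fin_dim_over k"
  shows "\<exists>(n::nat) (f :: 'b \<Rightarrow> nat \<Rightarrow> 'b).
           (\<forall>b i. i < n \<longrightarrow> f b i \<in> Z) \<and> (\<forall>b i. n \<le> i \<longrightarrow> f b i = 0) \<and>
           (\<forall>b c i. f (b + c) i = f b i + f c i) \<and>
           (\<forall>z\<in>Z. \<forall>b i. f (z * b) i = z * f b i) \<and>
           inj f"
proof -
  obtain t xt where t: "t \<in> NN" "\<And>x. t x \<in> k" "t xt \<noteq> 0" using get_t[OF fd] by blast
  obtain z0 where z0: "z0 \<in> Z" "z0 \<noteq> 0" "\<And>b. \<phi> z0 * t (\<phi> b) \<in> range \<phi>"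
    using N_denom[OF t(1)] by blast
  obtain u0 where u0: "u0 * \<phi> z0 = 1" using k_inv[of "\<phi> z0"] Z_nz_k[OF z0(1,2)] by blast
  obtain S where S: "finite S" "\<forall>a. \<exists>c. (\<forall>s\<in>S. c s \<in> k) \<and> a = (\<Sum>s\<in>S. c s * s)"
    using fd unfolding fin_dim_over_def by blast
  have "\<forall>s. \<exists>b z. z \<in> Z \<and> z \<noteq> 0 \<and> s * \<phi> z = \<phi> b" using loc_rep by blast
  then obtain eb ez where e: "\<And>s. ez s \<in> Z" "\<And>s. ez s \<noteq> 0" "\<And>s. s * \<phi> (ez s) = \<phi> (eb s)"
    by metis
  have "\<forall>s. \<exists>w. w \<in> k \<and> w * \<phi> (ez s) = 1" using k_inv Z_nz_k e by metis
  then obtain W where W: "\<And>s. W s \<in> k" "\<And>s. W s * \<phi> (ez s) = 1" by metis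
  have sW: "s = W s * \<phi> (eb s)" for s
  proof -
    have "s = s * \<phi> (ez s) * W s" using W(2)[of s] k_central[OF W(1)[of s]]
      by (metis mult.assoc mult.right_neutral)
    then show ?thesis using e(3) k_central[OF W(1)[of s]] by metis
  qed
  have span: "\<exists>c. (\<forall>s\<in>S. c s \<in> k) \<and> a = (\<Sum>s\<in>S. c s * \<phi> (eb s))" for a
  proof -
    obtain c where c: "\<forall>s\<in>S. c s \<in> k" "a = (\<Sum>s\<in>S. c s * s)" using S(2) by blast
    have "a = (\<Sum>s\<in>S. (c s * W s) * \<phi> (eb s))" using c(2) sW by (metis (no_types, lifting) mult.assoc sum.cong)
    moreover have "\<forall>s\<in>S. c s * W s \<in> k" using c(1) W(1) k_mult by blast
    ultimately show ?thesis by (intro exI[of _ "\<lambda>s. c s * W s"]) simp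
  qed
  define VV where "VV y = inv \<phi> (\<phi> z0 * t (\<phi> y))" for y
  have VV: "\<phi> (VV y) = \<phi> z0 * t (\<phi> y) \<and> VV y \<in> Z" for y
  proof -
    obtain b' where b': "\<phi> z0 * t (\<phi> y) = \<phi> b'" using z0(3) by (metis rangeE)
    have "VV y = b'" unfolding VV_def b' using phi_inj by simp
    moreover have "\<phi> b' \<in> k" using b' k_mult phi_Z[OF z0(1)] t(2) by metis
    ultimately show ?thesis using phi_k b' by simp
  qed
  have VV_add: "VV (y + y') = VV y + VV y'" for y y'
  proof -
    have "\<phi> (VV (y + y')) = \<phi> (VV y + VV y')"
      using VV[of "y + y'"] VV[of y] VV[of y'] N_add[OF t(1)] by (simp add: phi_add distrib_left)
    then show ?thesis using phi_eq by blast
  qed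
  have VV_mult: "VV (z * y) = z * VV y" if z: "z \<in> Z" for z y
  proof -
    have "\<phi> (VV (z * y)) = \<phi> z0 * (\<phi> z * t (\<phi> y))"
      using VV[of "z * y"] N_k[OF t(1) phi_Z[OF z]] by (simp add: phi_mult)
    also have "\<dots> = \<phi> z * (\<phi> z0 * t (\<phi> y))"
      using phiZ_central[OF z0(1), of "\<phi> z"] by (metis mult.assoc)
    also have "\<dots> = \<phi> (z * VV y)" using VV[of y] by (simp add: phi_mult)
    finally show ?thesis using phi_eq by blast
  qed
  have VV_0: "t (\<phi> y) = 0" if "VV y = 0" for y
  proof -
    have "\<phi> z0 * t (\<phi> y) = 0" using VV[of y] that phi_0 by simp
    then have "u0 * \<phi> z0 * t (\<phi> y) = 0" by (simp add: mult.assoc)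
    then show ?thesis using u0 by simp
  qed
  define qq where "qq e b = (if e = (0::nat) then q0 b else q1 b)" for e b
  have qq_add: "qq e (b + c) = qq e b + qq e c" for e b c
    unfolding qq_def using q0_add q1_add by simp
  have qq_mult: "qq e (z * b) = z * qq e b" if "z \<in> Z" for e z b
    unfolding qq_def using q_mult0[OF Z_B0[OF that]] by simp
  define V where "V b = (\<lambda>(e, s, s'). VV (eb s * qq e b * eb s'))" for b
  have V_add: "V (b + c) x = V b x + V c x" for b c x
    unfolding V_def using VV_add by (auto simp: qq_add distrib_left distrib_right split: prod.splits)
  have V_mult: "V (z * b) x = z * V b x" if z: "z \<in> Z" for z b x
  proof -
    have "eb s * qq e (z * b) * eb s' = z * (eb s * qq e b * eb s')" for e s s'
      using qq_mult[OF z] Z_comm[OF z] by (metis mult.assoc)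
    then show ?thesis unfolding V_def using VV_mult[OF z] by (auto split: prod.splits)
  qed
  have V_Z: "V b x \<in> Z" for b x unfolding V_def using VV by (auto split: prod.splits)
  define Idx where "Idx = {0, 1::nat} \<times> S \<times> S"
  have "finite Idx" unfolding Idx_def using S(1) by simp
  then obtain xs where xs: "set xs = Idx" using finite_list by blast
  define n where "n = length xs"
  define f where "f b i = (if i < n then V b (xs ! i) else 0)" for b i
  have f1: "\<forall>b i. i < n \<longrightarrow> f b i \<in> Z" unfolding f_def using V_Z by simp
  have f2: "\<forall>b i. n \<le> i \<longrightarrow> f b i = 0" unfolding f_def by simp
  have f3: "\<forall>b c i. f (b + c) i = f b i + f c i" unfolding f_def using V_add by simp
  have f4: "\<forall>z\<in>Z. \<forall>b i. f (z * b) i = z * f b i" unfolding f_def using V_mult by simp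
  have f5: "inj f"
  proof (rule injI)
    fix b b' assume eq: "f b = f b'"
    define d where "d = b - b'"
    have Vd: "V d x = 0" if "x \<in> Idx" for x
    proof -
      have "x \<in> set xs" using that xs by simp
      then obtain i where i: "i < n" "x = xs ! i" unfolding n_def in_set_conv_nth by blast
      have "f b i = f b' i" using eq by simp
      then have "V b x = V b' x" unfolding f_def using i by simp
      moreover have "V b x = V d x + V b' x" using V_add[of d b' x] by (simp add: d_def)
      ultimately show ?thesis by simp
    qed
    have tz: "t (a * \<phi> (qq e d) * a') = 0" if e: "e \<in> {0,1}" for e a a'
    proof -
      obtain c1 where c1: "\<forall>s\<in>S. c1 s \<in> k" "a = (\<Sum>s\<in>S. c1 s * \<phi> (eb s))" using span by blast
      obtain c2 where c2: "\<forall>s\<in>S. c2 s \<in> k" "a' = (\<Sum>s\<in>S. c2 s * \<phi> (eb s))" using span by blast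
      define X where "X = \<phi> (qq e d)"
      have inner: "\<phi> (eb s) * X * a' = (\<Sum>s'\<in>S. c2 s' * (\<phi> (eb s) * X * \<phi> (eb s')))" for s
      proof -
        have "\<phi> (eb s) * X * a' = (\<Sum>s'\<in>S. \<phi> (eb s) * X * (c2 s' * \<phi> (eb s')))"
          using c2(2) by (simp add: sum_distrib_left)
        also have "\<dots> = (\<Sum>s'\<in>S. c2 s' * (\<phi> (eb s) * X * \<phi> (eb s')))"
        proof (rule sum.cong)
          fix s' assume "s' \<in> S"
          then show "\<phi> (eb s) * X * (c2 s' * \<phi> (eb s')) = c2 s' * (\<phi> (eb s) * X * \<phi> (eb s'))"
            using k_central[of "c2 s'"] c2(1) by (metis mult.assoc)
        qed simp
        finally show ?thesis .
      qed
      have "a * X * a' = (\<Sum>s\<in>S. c1 s * (\<phi> (eb s) * X * a'))"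
        using c1(2) by (simp add: sum_distrib_right mult.assoc)
      then have "t (a * X * a') = (\<Sum>s\<in>S. c1 s * t (\<phi> (eb s) * X * a'))"
        using N_sum[OF t(1) S(1)] c1(1) by simp
      also have "\<dots> = (\<Sum>s\<in>S. c1 s * (\<Sum>s'\<in>S. c2 s' * t (\<phi> (eb s) * X * \<phi> (eb s'))))"
        using inner N_sum[OF t(1) S(1)] c2(1) by simp
      also have "\<dots> = 0"
      proof -
        have "t (\<phi> (eb s) * X * \<phi> (eb s')) = 0" if "s \<in> S" "s' \<in> S" for s s'
        proof -
          have "(e, s, s') \<in> Idx" using e that unfolding Idx_def by auto
          then have "V d (e, s, s') = 0" by (rule Vd)
          then have "VV (eb s * qq e d * eb s') = 0" unfolding V_def by simp
          then have "t (\<phi> (eb s * qq e d * eb s')) = 0" by (rule VV_0)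
          then show ?thesis unfolding X_def by (simp add: phi_mult)
        qed
        then show ?thesis by simp
      qed
      finally show ?thesis unfolding X_def .
    qed
    let ?I = "{x. \<forall>a a'. t (a * p0 x * a') = 0 \<and> t (a * p1 x * a') = 0}"
    have "\<phi> d \<in> ?I" using tz[of 0] tz[of 1] p_phi unfolding qq_def by simp
    moreover have "1 \<notin> ?I"
    proof
      assume "1 \<in> ?I"
      then have "t (1 * p0 1 * xt) = 0" by blast
      then show False using p0_1 t(3) by simp
    qed
    ultimately have "?I = {0}" using A_simple[OF I_ideal[OF t(1)]] by blast
    then have "\<phi> d = 0" using \<open>\<phi> d \<in> ?I\<close> by blast
    then show "b = b'" using phi_eq0 d_def by simp
  qed
  show ?thesis using f1 f2 f3 f4 f5 by blast
qed

end

theorem theorem1: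
  fixes B0 B1 :: "'b::ring_1 set" and Z :: "'b set" and \<phi> :: "'b \<Rightarrow> 'a::ring_1"
  assumes super: "superalgebra B0 B1"
    and Z_def: "Z = center \<inter> B0"
    and regular: "\<forall>z\<in>Z. z \<noteq> 0 \<longrightarrow> (\<forall>b. z * b = 0 \<longrightarrow> b = 0)"
    and loc: "is_localization Z \<phi>"
    and simple: "simple_superalgebra (loc_part Z \<phi> B0) (loc_part Z \<phi> B1)"
    and fd: "fin_dim_over (loc_part Z \<phi> Z)"
  shows "\<exists>(n::nat) (f :: 'b \<Rightarrow> nat \<Rightarrow> 'b).
           (\<forall>b i. i < n \<longrightarrow> f b i \<in> Z) \<and> (\<forall>b i. n \<le> i \<longrightarrow> f b i = 0) \<and>
           (\<forall>b c i. f (b + c) i = f b i + f c i) \<and>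
           (\<forall>z\<in>Z. \<forall>b i. f (z * b) i = z * f b i) \<and>
           inj f"
proof -
  interpret ctx B0 B1 Z \<phi> using super Z_def regular loc simple by unfold_locales
  show ?thesis using final[OF fd] .
qed

end
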